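(* Let $(\phi_t)$ be a parabolic semigroup of zero hyperbolic step in $\mathbb{H}$ with Denjoy--Wolff point $\infty$, and let its infinitesimal generator $G\colon\mathbb{H}\to\mathbb{H}\cup\mathbb{R}$ have Herglotz representation $G(z)=\alpha z+\beta+\int_{\mathbb{R}}\frac{1+sz}{s-z}\,d\mu(s)$ ($\alpha\ge0$, $\beta\in\mathbb{R}$, $\mu$ positive finite measure). The following are equivalent: (a) $(\phi_t)$ is of extremal rate; (b) $\limsup_{t\to+\infty}|\phi_t(z)|/\sqrt{t}<+\infty$ for some $z\in\mathbb{H}$ (equivalently, for all $z\in\mathbb{H}$); (c) $\alpha=0$, $\int_{\mathbb{R}}s^2\,d\mu(s)<+\infty$, and $\beta=\int_{\mathbb{R}}s\,d\mu(s)$. Moreover, if these hold, then for all $z\in\mathbb{H}$, $$\lim_{t\to+\infty}\frac{\phi_t(z)}{\sqrt t}=i\sqrt{2\int_{\mathbb{R}}(1+s^2)\,d\mu(s)}.$$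
   Context: $\mathbb{H}$ is the upper half-plane. A semigroup in $\mathbb{H}$ is a family $(\phi_t)_{t\ge0}$ of holomorphic self-maps of $\mathbb{H}$ with $\phi_0=\mathrm{id}$, $\phi_{t+s}=\phi_t\circ\phi_s$, and $\phi_t\to\mathrm{id}$ pointwise as $t\to0^+$. Non-elliptic: no $z\in\mathbb{H}$, $t>0$ with $\phi_t(z)=z$; then all orbits converge to a common boundary point (the Denjoy--Wolff point). With Denjoy--Wolff point $\infty$: parabolic means $\angle\lim_{z\to\infty}\phi_t(z)/z=1$ for all $t$. Zero hyperbolic step means $\lim_{t\to+\infty}d_{\mathbb{H}}(\phi_{t+1}(z),\phi_t(z))=0$ for some (equivalently all) $z$, where $d_{\mathbb{H}}$ is the hyperbolic distance $d_{\mathbb{H}}(z,w)=\frac12\log\frac{1+\rho}{1-\rho}$, $\rho=|z-w|/|z-\bar w|$. Such a semigroup is of extremal rate if there is $L\in(0,+\infty)$ with $\lim_{t\to+\infty}|\phi_t(z)|/\sqrt t=L$ for all $z\in\mathbb{H}$. The infinitesimal generator $G$ satisfies $\partial_t\phi_t(z)=G(\phi_t(z))$. *)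

theory Defs
  imports "HOL-Analysis.Analysis" "HOL-Library.Liminf_Limsup"
begin

definition UHP :: "complex set" where
  "UHP = {z. Im z > 0}"

definition hdist_H :: "complex \<Rightarrow> complex \<Rightarrow> real" where
  "hdist_H z w = (let \<rho> = cmod (z - w) / cmod (z - cnj w) in (1/2) * ln ((1 + \<rho>) / (1 - \<rho>)))"

definition semigroup_H :: "(real \<Rightarrow> complex \<Rightarrow> complex) \<Rightarrow> bool" where
  "semigroup_H \<phi> \<longleftrightarrow>
     (\<forall>t\<ge>0. \<phi> t holomorphic_on UHP \<and> \<phi> t ` UHP \<subseteq> UHP) \<and>
     (\<forall>z\<in>UHP. \<phi> 0 z = z) \<and>
     (\<forall>t\<ge>0. \<forall>s\<ge>0. \<forall>z\<in>UHP. \<phi> (t + s) z = \<phi> t (\<phi> s z)) \<and>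
     (\<forall>z\<in>UHP. ((\<lambda>t. \<phi> t z) \<longlongrightarrow> z) (at_right 0))"

definition non_elliptic :: "(real \<Rightarrow> complex \<Rightarrow> complex) \<Rightarrow> bool" where
  "non_elliptic \<phi> \<longleftrightarrow> \<not> (\<exists>z\<in>UHP. \<exists>t>0. \<phi> t z = z)"

definition DW_infinity :: "(real \<Rightarrow> complex \<Rightarrow> complex) \<Rightarrow> bool" where
  "DW_infinity \<phi> \<longleftrightarrow> (\<forall>z\<in>UHP. filterlim (\<lambda>t. \<phi> t z) at_infinity at_top)"

definition angular_lim_infty :: "(complex \<Rightarrow> complex) \<Rightarrow> complex \<Rightarrow> bool" where
  "angular_lim_infty f L \<longleftrightarrow>
     (\<forall>M>0. (f \<longlongrightarrow> L) (inf at_infinity (principal {z. Im z > 0 \<and> \<bar>Re z\<bar> \<le> M * Im z})))"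

definition parabolic_semigroup :: "(real \<Rightarrow> complex \<Rightarrow> complex) \<Rightarrow> bool" where
  "parabolic_semigroup \<phi> \<longleftrightarrow> (\<forall>t\<ge>0. angular_lim_infty (\<lambda>z. \<phi> t z / z) 1)"

definition zero_hyperbolic_step :: "(real \<Rightarrow> complex \<Rightarrow> complex) \<Rightarrow> bool" where
  "zero_hyperbolic_step \<phi> \<longleftrightarrow>
     (\<exists>z\<in>UHP. ((\<lambda>t. hdist_H (\<phi> (t + 1) z) (\<phi> t z)) \<longlongrightarrow> 0) at_top)"

definition extremal_rate :: "(real \<Rightarrow> complex \<Rightarrow> complex) \<Rightarrow> bool" where
  "extremal_rate \<phi> \<longleftrightarrow>
     (\<exists>L>0. \<forall>z\<in>UHP. ((\<lambda>t. cmod (\<phi> t z) / sqrt t) \<longlongrightarrow> L) at_top)"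

definition infinitesimal_generator ::
  "(real \<Rightarrow> complex \<Rightarrow> complex) \<Rightarrow> (complex \<Rightarrow> complex) \<Rightarrow> bool" where
  "infinitesimal_generator \<phi> G \<longleftrightarrow>
     (\<forall>z\<in>UHP. \<forall>t\<ge>0. ((\<lambda>s. \<phi> s z) has_vector_derivative G (\<phi> t z)) (at t within {0..}))"

end

theory Submission imports Defs "HOL-Real_Asymp.Real_Asymp" begin

lemma deriv_Re:
  assumes "(f has_vector_derivative f') (at t)"
  shows "((\<lambda>t. Re (f t)) has_real_derivative Re f') (at t)"
proof -
  have "(\<lambda>x. x * Re f') = (*) (Re f')" by (auto simp: fun_eq_iff)
  thus ?thesis using has_derivative_Re[OF assms[unfolded has_vector_derivative_def]]
    by (simp add: has_field_derivative_def)
qed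

lemma deriv_Im:
  assumes "(f has_vector_derivative f') (at t)"
  shows "((\<lambda>t. Im (f t)) has_real_derivative Im f') (at t)"
proof -
  have "(\<lambda>x. x * Im f') = (*) (Im f')" by (auto simp: fun_eq_iff)
  thus ?thesis using has_derivative_Im[OF assms[unfolded has_vector_derivative_def]]
    by (simp add: has_field_derivative_def)
qed

lemma barrier:
  fixes f :: "real \<Rightarrow> real"
  assumes ab: "a \<le> b" and cont: "continuous_on {a..b} f"
    and der: "\<And>x. a < x \<Longrightarrow> x < b \<Longrightarrow> f x < c \<Longrightarrow> (\<exists>y. DERIV f x :> y \<and> y \<ge> 0)"
    and dif: "\<And>x. a < x \<Longrightarrow> x < b \<Longrightarrow> f differentiable (at x)"
  shows "f b \<ge> min (f a) c"
proof (rule ccontr)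
  define m where "m = min (f a) c"
  assume "\<not> f b \<ge> min (f a) c"
  hence fb: "f b < m" unfolding m_def by linarith
  define S where "S = {a..b} \<inter> f -` {m..}"
  have clS: "closed S" unfolding S_def
    by (rule continuous_closed_preimage[OF cont]) auto
  have aS: "a \<in> S" using ab by (auto simp: S_def m_def)
  have bdd: "bdd_above S" by (auto simp: S_def bdd_above_def)
  define s where "s = Sup S"
  have sS: "s \<in> S" unfolding s_def using closed_contains_Sup[OF _ bdd clS] aS by blast
  hence "s \<le> b" "a \<le> s" "f s \<ge> m" by (auto simp: S_def)
  moreover have "s \<noteq> b" using sS fb by (auto simp: S_def)
  ultimately have sb: "s < b" by simp
  have "{s..b} \<subseteq> {a..b}" using \<open>a \<le> s\<close> by auto
  hence csb: "continuous_on {s..b} f" by (rule continuous_on_subset[OF cont])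
  obtain l z where z: "s < z" "z < b" "DERIV f z :> l" "f b - f s = (b - s) * l"
    using MVT[OF sb csb] dif \<open>a \<le> s\<close> by (meson le_less_trans)
  have "z \<notin> S"
  proof
    assume "z \<in> S"
    hence "z \<le> s" unfolding s_def using bdd by (rule cSup_upper)
    thus False using z by simp
  qed
  hence "f z < m" using z \<open>a \<le> s\<close> by (auto simp: S_def)
  hence "f z < c" by (simp add: m_def)
  then obtain y where y: "DERIV f z :> y" "y \<ge> 0" using der[of z] z \<open>a \<le> s\<close> by auto
  have "l = y" using DERIV_unique[OF z(3) y(1)] .
  hence "(b - s) * l \<ge> 0" using sb y by simp
  hence "f b \<ge> f s" using z(4) by linarith
  thus False using fb \<open>f s \<ge> m\<close> by simp
qed

lemma lhop_lin:
  fixes f f' :: "real \<Rightarrow> real"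
  assumes "eventually (\<lambda>t. DERIV f t :> f' t) at_top" "(f' \<longlongrightarrow> L) at_top"
  shows "((\<lambda>t. f t / t) \<longlongrightarrow> L) at_top"
proof (rule lhospital_at_top_at_top[where g'="\<lambda>_. 1"])
  show "filterlim (\<lambda>x. x) at_top at_top" by (rule filterlim_ident)
  show "\<forall>\<^sub>F x in at_top. (\<lambda>_. 1::real) x \<noteq> 0" by simp
  show "\<forall>\<^sub>F x in at_top. ((\<lambda>x. x) has_real_derivative 1) (at x)"
    by (auto intro!: derivative_eq_intros)
  show "((\<lambda>x. f' x / 1) \<longlongrightarrow> L) at_top" using assms(2) by simp
qed (use assms in auto)

lemma growth_contra:
  fixes a b K :: real
  assumes ev: "eventually (\<lambda>t. a * t + b * ln t \<le> K) at_top" and a: "a \<ge> 0"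
  shows "a = 0 \<and> b \<le> 0"
proof (rule ccontr)
  assume "\<not> (a = 0 \<and> b \<le> 0)"
  hence "a > 0 \<or> (a = 0 \<and> b > 0)" using a by auto
  hence "filterlim (\<lambda>t. a * t + b * ln t) at_top at_top"
  proof
    assume "a > 0" thus ?thesis by real_asymp
  next
    assume "a = 0 \<and> b > 0" thus ?thesis by real_asymp
  qed
  hence "eventually (\<lambda>t. a * t + b * ln t > K) at_top"
    by (simp add: filterlim_at_top_dense)
  with ev have "eventually (\<lambda>t::real. False) at_top" by eventually_elim auto
  thus False by simp
qed

lemma F_deriv:
  fixes C R t :: real
  assumes "C > 0" "R \<ge> 0" "t > 0"
  shows "((\<lambda>t. 2 / C^2 * (ln (R + C * sqrt t) + R / (R + C * sqrt t)))
          has_real_derivative 1 / (R + C * sqrt t)^2) (at t)"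
proof -
  have p: "R + C * sqrt t > 0" using assms by (simp add: add_nonneg_pos)
  have sq: "(sqrt has_real_derivative inverse (sqrt t) / 2) (at t)"
    using DERIV_real_sqrt[OF assms(3)] .
  have g: "((\<lambda>t. R + C * sqrt t) has_real_derivative C * (inverse (sqrt t) / 2)) (at t)"
    using DERIV_add[OF DERIV_const DERIV_cmult[OF sq, of C]] by simp
  have l: "((\<lambda>t. ln (R + C * sqrt t)) has_real_derivative (C * (inverse (sqrt t) / 2)) / (R + C * sqrt t)) (at t)"
    using DERIV_chain2[OF DERIV_ln_divide[OF p] g] by (simp add: mult.commute)
  have q: "((\<lambda>t. R / (R + C * sqrt t)) has_real_derivative - (R * (C * (inverse (sqrt t) / 2)) / (R + C * sqrt t)^2)) (at t)"
    using DERIV_divide[OF DERIV_const g, of R] p by (simp add: power2_eq_square)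
  have all: "((\<lambda>t. 2 / C^2 * (ln (R + C * sqrt t) + R / (R + C * sqrt t))) has_real_derivative
     2 / C^2 * ((C * (inverse (sqrt t) / 2)) / (R + C * sqrt t) - (R * (C * (inverse (sqrt t) / 2)) / (R + C * sqrt t)^2))) (at t)"
    using DERIV_cmult[OF DERIV_add[OF l q], of "2 / C^2"] by simp
  have "2 / C^2 * ((C * (inverse (sqrt t) / 2)) / (R + C * sqrt t) - (R * (C * (inverse (sqrt t) / 2)) / (R + C * sqrt t)^2))
      = 1 / (R + C * sqrt t)^2"
  proof -
    define q where "q = sqrt t"
    have q0: "q > 0" using assms by (simp add: q_def)
    have p': "R + C * q > 0" using p by (simp add: q_def)
    have "2 / C^2 * ((C * (inverse q / 2)) / (R + C * q) - (R * (C * (inverse q / 2)) / (R + C * q)^2))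
      = 2 / C^2 * (C * (inverse q / 2)) * ((R + C * q) - R) / (R + C * q)^2"
      using p' q0 by (simp add: divide_simps power2_eq_square) (simp add: algebra_simps)
    also have "\<dots> = 1 / (R + C * q)^2" using q0 assms(1) by (simp add: field_simps power2_eq_square)
    finally show ?thesis by (simp add: q_def)
  qed
  thus ?thesis using all by simp
qed

lemma pw_ineq:
  fixes s x y :: real
  assumes y: "y > 0"
  shows "(1 + s^2) * (x * (2*x - s)) / ((s - x)^2 + y^2)
     \<ge> indicator {-\<bar>x\<bar>..\<bar>x\<bar>} s * (1 + s^2) * (x^2 / (4 * (x^2 + y^2)))
        - 2 * ((1 + s^2) - indicator {-(2*\<bar>x\<bar>)..2*\<bar>x\<bar>} s * (1 + s^2))"
proof -
  define D where "D = (s - x)^2 + y^2"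
  define W where "W = x^2 + y^2"
  define p where "p = 1 + s^2"
  have Dp: "D > 0" using y by (simp add: D_def add_nonneg_pos)
  have Wp: "W > 0" using y by (simp add: W_def add_nonneg_pos)
  have pp: "p > 0" by (simp add: p_def add_pos_nonneg)
  have xs: "x * s \<le> \<bar>x\<bar> * \<bar>s\<bar>" by (metis abs_ge_self abs_mult)
  consider (a) "\<bar>s\<bar> \<le> \<bar>x\<bar>" | (b) "\<bar>x\<bar> < \<bar>s\<bar>" "\<bar>s\<bar> \<le> 2 * \<bar>x\<bar>" | (c) "2 * \<bar>x\<bar> < \<bar>s\<bar>" by linarith
  thus ?thesis
  proof cases
    case a
    have i1: "indicator {-\<bar>x\<bar>..\<bar>x\<bar>} s = (1::real)" using a by (auto simp: indicator_def abs_le_iff)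
    have i2: "indicator {-(2*\<bar>x\<bar>)..2*\<bar>x\<bar>} s = (1::real)" using a by (auto simp: indicator_def abs_le_iff)
    have "\<bar>x\<bar> * \<bar>s\<bar> \<le> \<bar>x\<bar> * \<bar>x\<bar>" using a by (intro mult_left_mono) auto
    hence h1: "x * (2*x - s) \<ge> x^2" using xs by (simp add: power2_eq_square algebra_simps)
    have "\<bar>s - x\<bar> \<le> 2 * \<bar>x\<bar>" using a by linarith
    hence "\<bar>s - x\<bar>^2 \<le> (2 * \<bar>x\<bar>)^2" by (intro power_mono) auto
    hence "(s - x)^2 \<le> 4 * x^2" by (simp add: power_mult_distrib)
    moreover have "y^2 \<ge> 0" by simp
    ultimately have h2: "D \<le> 4 * W" unfolding D_def W_def distrib_left by linarith
    have "x^2 * D \<le> x * (2*x - s) * (4 * W)"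
      using h1 h2 Dp by (intro mult_mono) (auto intro: order_trans[OF zero_le_power2 h1])
    hence "x^2 / (4 * W) \<le> x * (2*x - s) / D"
      using Dp Wp by (simp add: divide_simps)
    hence "p * (x^2 / (4 * W)) \<le> p * (x * (2*x - s) / D)" using pp by (intro mult_left_mono) auto
    thus ?thesis using i1 i2 by (simp add: D_def W_def p_def)
  next
    case b
    have i1: "indicator {-\<bar>x\<bar>..\<bar>x\<bar>} s = (0::real)" using b by (auto simp: indicator_def abs_le_iff)
    have i2: "indicator {-(2*\<bar>x\<bar>)..2*\<bar>x\<bar>} s = (1::real)" using b by (auto simp: indicator_def abs_le_iff)
    have "\<bar>x\<bar> * \<bar>s\<bar> \<le> \<bar>x\<bar> * (2 * \<bar>x\<bar>)" using b by (intro mult_left_mono) auto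
    hence "x * (2*x - s) \<ge> 0" using xs by (simp add: power2_eq_square algebra_simps)
    hence "p * (x * (2*x - s)) / D \<ge> 0" using pp Dp by simp
    thus ?thesis using i1 i2 by (simp add: D_def W_def p_def)
  next
    case c
    have i1: "indicator {-\<bar>x\<bar>..\<bar>x\<bar>} s = (0::real)" using c by (auto simp: indicator_def abs_le_iff)
    have i2: "indicator {-(2*\<bar>x\<bar>)..2*\<bar>x\<bar>} s = (0::real)" using c by (auto simp: indicator_def abs_le_iff)
    have "\<bar>x\<bar> * \<bar>s\<bar> \<le> (\<bar>s\<bar> / 2) * \<bar>s\<bar>" using c by (intro mult_right_mono) auto
    moreover have "(\<bar>s\<bar> / 2) * \<bar>s\<bar> = s^2 / 2" by (simp add: power2_eq_square abs_mult_self_eq)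
    moreover have "x * (2*x - s) = 2 * x^2 - x * s" by (simp add: power2_eq_square algebra_simps)
    moreover have "x^2 \<ge> 0" by simp
    ultimately have e1: "x * (2*x - s) \<ge> - (s^2 / 2)" using xs by linarith
    have "\<bar>s\<bar> / 2 \<le> \<bar>s - x\<bar>" using c by linarith
    hence "(\<bar>s\<bar> / 2)^2 \<le> \<bar>s - x\<bar>^2" by (intro power_mono) auto
    hence "s^2 / 4 \<le> (s - x)^2" by (simp add: power_divide)
    hence e2: "s^2 / 4 \<le> D" unfolding D_def by (smt (verit) zero_le_power2)
    have "x * (2*x - s) \<ge> -2 * D" using e1 e2 by linarith
    hence "x * (2*x - s) / D \<ge> -2" using Dp by (simp add: divide_simps)
    hence "p * (x * (2*x - s) / D) \<ge> p * (-2)" using pp by (intro mult_left_mono) auto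
    thus ?thesis using i1 i2 by (simp add: D_def W_def p_def)
  qed
qed

locale herg = finite_measure \<mu> for \<mu> :: "real measure" +
  fixes \<alpha> \<beta> :: real and G :: "complex \<Rightarrow> complex"
  assumes sets_mu: "sets \<mu> = sets borel"
    and alpha: "\<alpha> \<ge> 0"
    and herg: "\<And>z. Im z > 0 \<Longrightarrow> G z = complex_of_real \<alpha> * z + complex_of_real \<beta>
                     + (\<integral>s. (1 + complex_of_real s * z) / (complex_of_real s - z) \<partial>\<mu>)"
begin

lemma meas: "f \<in> borel_measurable borel \<Longrightarrow> f \<in> borel_measurable \<mu>"
  unfolding measurable_cong_sets[OF sets_mu refl] .

lemma kern_meas: "(\<lambda>s. (1 + complex_of_real s * z) / (complex_of_real s - z)) \<in> borel_measurable \<mu>"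
  by (rule meas) measurable

lemma kern_bound:
  assumes "Im z > 0"
  shows "cmod ((1 + complex_of_real s * z) / (complex_of_real s - z)) \<le> cmod z + cmod (1 + z^2) / Im z"
proof -
  have ne: "complex_of_real s - z \<noteq> 0" using assms by (auto simp: complex_eq_iff)
  have eq: "(1 + complex_of_real s * z) / (complex_of_real s - z) = z + (1 + z^2) / (complex_of_real s - z)"
    using ne by (simp add: field_simps power2_eq_square)
  have "Im z \<le> cmod (complex_of_real s - z)"
    using abs_Im_le_cmod[of "complex_of_real s - z"] by simp
  hence "cmod ((1 + z^2) / (complex_of_real s - z)) \<le> cmod (1 + z^2) / Im z"
    using assms by (simp add: norm_divide frac_le)
  thus ?thesis unfolding eq by (meson norm_triangle_ineq order_trans add_left_mono)
qed

lemma kern_int: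
  assumes "Im z > 0"
  shows "integrable \<mu> (\<lambda>s. (1 + complex_of_real s * z) / (complex_of_real s - z))"
  by (rule integrable_const_bound[where B="cmod z + cmod (1 + z^2) / Im z"])
     (use kern_bound[OF assms] kern_meas in auto)

lemma Im_kern:
  assumes "Im z > 0"
  shows "Im ((1 + complex_of_real s * z) / (complex_of_real s - z))
         = (1 + s^2) * Im z / ((s - Re z)^2 + (Im z)^2)"
  by (simp add: Im_divide power2_eq_square algebra_simps)

lemma Im_G:
  assumes "Im z > 0"
  shows "Im (G z) = \<alpha> * Im z + (\<integral>s. (1 + s^2) * Im z / ((s - Re z)^2 + (Im z)^2) \<partial>\<mu>)"
proof -
  have "Im (\<integral>s. (1 + complex_of_real s * z) / (complex_of_real s - z) \<partial>\<mu>)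
     = (\<integral>s. Im ((1 + complex_of_real s * z) / (complex_of_real s - z)) \<partial>\<mu>)"
    using kern_int[OF assms] by (rule integral_Im[symmetric])
  also have "\<dots> = (\<integral>s. (1 + s^2) * Im z / ((s - Re z)^2 + (Im z)^2) \<partial>\<mu>)"
    using Im_kern[OF assms] by simp
  finally show ?thesis using herg[OF assms] by simp
qed

definition mR :: "real \<Rightarrow> real" where
  "mR R = (\<integral>s. indicator {-R..R} s * (1 + s^2) \<partial>\<mu>)"

lemma int_ind: "integrable \<mu> (\<lambda>s. indicator {-R..R} s * (1 + s^2))"
proof (rule integrable_const_bound[where B="1 + R^2"])
  show "AE x in \<mu>. norm (indicator {-R..R} x * (1 + x^2)) \<le> 1 + R^2"
  proof (rule AE_I2)
    fix x :: real
    show "norm (indicator {-R..R} x * (1 + x^2)) \<le> 1 + R^2"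
    proof (cases "x \<in> {-R..R}")
      case True
      hence "x^2 \<le> R^2" by (auto intro!: power2_le_iff_abs_le[THEN iffD2] simp: abs_le_iff)
      thus ?thesis using True by (simp add: abs_of_nonneg add_nonneg_nonneg)
    qed (simp add: add_nonneg_nonneg)
  qed
  show "(\<lambda>s. indicator {-R..R} s * (1 + s^2)) \<in> borel_measurable \<mu>"
    by (rule meas) measurable
qed

lemma mR_nonneg: "mR R \<ge> 0"
  unfolding mR_def by (rule integral_nonneg_AE) (auto intro!: AE_I2 simp: indicator_def)

lemma D_eq: "(s - Re z)^2 + (Im z)^2 = (cmod (complex_of_real s - z))^2"
  using cmod_power2[of "complex_of_real s - z"] by (simp add: power2_eq_square algebra_simps)

lemma ImG_nonneg:
  assumes "Im z > 0"
  shows "Im (G z) \<ge> 0"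
  unfolding Im_G[OF assms] using alpha assms
  by (intro add_nonneg_nonneg integral_nonneg_AE) (auto intro!: AE_I2 divide_nonneg_nonneg)

lemma int_ImK:
  assumes "Im z > 0"
  shows "integrable \<mu> (\<lambda>s. (1 + s^2) * Im z / ((s - Re z)^2 + (Im z)^2))"
proof -
  have "integrable \<mu> (\<lambda>s. Im ((1 + complex_of_real s * z) / (complex_of_real s - z)))"
    using kern_int[OF assms] by (rule integrable_Im)
  thus ?thesis using Im_kern[OF assms] by simp
qed

lemma ImG_lower:
  assumes z: "Im z > 0" and R: "R \<ge> 0"
  shows "Im (G z) \<ge> \<alpha> * Im z + Im z * mR R / (R + cmod z)^2"
proof -
  let ?c = "Im z / (R + cmod z)^2"
  have "z \<noteq> 0" using z by auto
  hence pos: "R + cmod z > 0" using R by (simp add: add_nonneg_pos)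
  have "(\<integral>s. indicator {-R..R} s * (1 + s^2) * ?c \<partial>\<mu>)
        \<le> (\<integral>s. (1 + s^2) * Im z / ((s - Re z)^2 + (Im z)^2) \<partial>\<mu>)"
  proof (rule integral_mono)
    show "integrable \<mu> (\<lambda>s. indicator {-R..R} s * (1 + s^2) * ?c)"
      using int_ind by (rule integrable_mult_left)
    show "integrable \<mu> (\<lambda>s. (1 + s^2) * Im z / ((s - Re z)^2 + (Im z)^2))"
      using int_ImK[OF z] .
    fix s :: real
    show "indicator {-R..R} s * (1 + s^2) * ?c \<le> (1 + s^2) * Im z / ((s - Re z)^2 + (Im z)^2)"
    proof (cases "s \<in> {-R..R}")
      case True
      have Dp: "(s - Re z)^2 + (Im z)^2 > 0" using z by (simp add: add_nonneg_pos)
      have "cmod (complex_of_real s - z) \<le> cmod (complex_of_real s) + cmod z" by (rule norm_triangle_ineq4)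
      also have "\<dots> \<le> R + cmod z" using True by auto
      finally have "(s - Re z)^2 + (Im z)^2 \<le> (R + cmod z)^2"
        unfolding D_eq by (simp add: power_mono)
      hence "Im z / (R + cmod z)^2 \<le> Im z / ((s - Re z)^2 + (Im z)^2)"
        using z Dp pos by (intro divide_left_mono) auto
      hence "(1 + s^2) * (Im z / (R + cmod z)^2) \<le> (1 + s^2) * (Im z / ((s - Re z)^2 + (Im z)^2))"
        by (intro mult_left_mono) (auto simp: add_nonneg_nonneg)
      thus ?thesis using True by simp
    next
      case False
      thus ?thesis using z by (simp add: divide_nonneg_nonneg add_nonneg_nonneg)
    qed
  qed
  also have "(\<integral>s. indicator {-R..R} s * (1 + s^2) * ?c \<partial>\<mu>) = mR R * ?c"
    unfolding mR_def by (rule integral_mult_left_zero)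
  finally show ?thesis unfolding Im_G[OF z] by (simp add: mult.commute)
qed

lemma second_moment:
  assumes B: "\<And>R. R \<ge> 0 \<Longrightarrow> mR R \<le> B"
  shows "(\<integral>\<^sup>+ s. ennreal (s^2) \<partial>\<mu>) < \<infinity>"
proof -
  define f where "f n s = ennreal (indicator {- real n..real n} s * s^2)" for n :: nat and s :: real
  have inc: "incseq f"
    unfolding f_def by (auto simp: incseq_def le_fun_def indicator_def intro!: ennreal_leI)
  have fm: "f n \<in> borel_measurable \<mu>" for n unfolding f_def by (rule meas) measurable
  have lim: "(\<lambda>n. f n s) \<longlonglongrightarrow> ennreal (s^2)" for s
  proof (rule tendsto_eventually)
    obtain N :: nat where "\<bar>s\<bar> \<le> real N" using real_arch_simple by blast
    thus "eventually (\<lambda>n. f n s = ennreal (s^2)) sequentially"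
      unfolding eventually_sequentially f_def
      by (intro exI[of _ N]) (auto simp: indicator_def abs_le_iff)
  qed
  have L: "(\<lambda>n. integral\<^sup>N \<mu> (f n)) \<longlonglongrightarrow> (\<integral>\<^sup>+ s. ennreal (s^2) \<partial>\<mu>)"
    using nn_integral_LIMSEQ[OF inc fm lim] .
  have bnd: "integral\<^sup>N \<mu> (f n) \<le> ennreal B" for n
  proof -
    have "integral\<^sup>N \<mu> (f n) \<le> (\<integral>\<^sup>+ s. ennreal (indicator {- real n..real n} s * (1 + s^2)) \<partial>\<mu>)"
      unfolding f_def by (intro nn_integral_mono ennreal_leI) (auto simp: indicator_def)
    also have "\<dots> = ennreal (mR (real n))"
      unfolding mR_def by (intro nn_integral_eq_integral int_ind) (auto intro!: AE_I2 simp: indicator_def add_nonneg_nonneg)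
    also have "\<dots> \<le> ennreal B" using B[of "real n"] by (intro ennreal_leI) simp
    finally show ?thesis .
  qed
  have "(\<integral>\<^sup>+ s. ennreal (s^2) \<partial>\<mu>) \<le> ennreal B"
    using L bnd by (intro LIMSEQ_le_const2[OF L]) auto
  thus ?thesis by (simp add: le_less_trans)
qed

lemma int_sq: "(\<integral>\<^sup>+ s. ennreal (s^2) \<partial>\<mu>) < \<infinity> \<Longrightarrow> integrable \<mu> (\<lambda>s. s^2)"
  by (rule integrableI_bounded) (auto intro: meas)

end

locale orbit = herg +
  fixes w :: "real \<Rightarrow> complex"
  assumes w_im: "\<And>t. t \<ge> 0 \<Longrightarrow> Im (w t) > 0"
    and w_der0: "\<And>t. t \<ge> 0 \<Longrightarrow> (w has_vector_derivative G (w t)) (at t within {0..})"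
    and w_inf: "filterlim w at_infinity at_top"
begin

lemma w_der: assumes "t > 0" shows "(w has_vector_derivative G (w t)) (at t)"
proof -
  have "(w has_vector_derivative G (w t)) (at t within {0<..})"
  proof -
    have sub: "{0<..} \<subseteq> {0::real..}" by auto
    have "(w has_vector_derivative G (w t)) (at t within {0..})" using assms by (intro w_der0) simp
    from has_vector_derivative_within_subset[OF this sub] show ?thesis .
  qed
  thus ?thesis using at_within_open[of t "{0<..}"] assms by simp
qed

lemma w_isCont: "t > 0 \<Longrightarrow> isCont w t"
  using w_der by (meson has_vector_derivative_continuous)

lemma w_cont: "a > 0 \<Longrightarrow> continuous_on {a..b} w"
  using w_isCont by (intro continuous_at_imp_continuous_on) auto

lemma x_der: "t > 0 \<Longrightarrow> ((\<lambda>t. Re (w t)) has_real_derivative Re (G (w t))) (at t)"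
  using w_der by (rule deriv_Re)

lemma y_der: "t > 0 \<Longrightarrow> ((\<lambda>t. Im (w t)) has_real_derivative Im (G (w t))) (at t)"
  using w_der by (rule deriv_Im)

lemma y_mono: assumes "0 < a" "a \<le> b" shows "Im (w a) \<le> Im (w b)"
proof (rule DERIV_nonneg_imp_increasing_open[OF assms(2)])
  fix x assume "a < x" "x < b"
  thus "\<exists>y. ((\<lambda>t. Im (w t)) has_real_derivative y) (at x) \<and> 0 \<le> y"
    using y_der[of x] ImG_nonneg[OF w_im[of x]] assms by auto
next
  show "continuous_on {a..b} (\<lambda>t. Im (w t))"
    using w_cont[OF assms(1)] by (intro continuous_intros)
qed

lemma W_pos: "t \<ge> 0 \<Longrightarrow> (Re (w t))^2 + (Im (w t))^2 > 0"
  using w_im[of t] by (simp add: add_nonneg_pos)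

lemma W_ne: "t \<ge> 0 \<Longrightarrow> (Re (w t))^2 + (Im (w t))^2 \<noteq> 0"
  using W_pos[of t] by linarith

lemma norm_w_top: "filterlim (\<lambda>t. cmod (w t)) at_top at_top"
  using w_inf by (rule filterlim_at_infinity_imp_norm_at_top)

lemma growth:
  assumes C: "C > 0" and bnd: "eventually (\<lambda>t. cmod (w t) \<le> C * sqrt t) at_top" and R: "R \<ge> 0"
  shows "\<alpha> = 0 \<and> mR R \<le> C^2 / 2"
proof -
  obtain T where T: "\<And>t. t \<ge> T \<Longrightarrow> cmod (w t) \<le> C * sqrt t"
    using bnd unfolding eventually_at_top_linorder by blast
  define t0 where "t0 = max T 1"
  have t0: "t0 \<ge> 1" "\<And>t. t \<ge> t0 \<Longrightarrow> cmod (w t) \<le> C * sqrt t"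
    using T by (auto simp: t0_def)
  define F where "F t = 2 / C^2 * (ln (R + C * sqrt t) + R / (R + C * sqrt t))" for t
  define h where "h t = ln (Im (w t)) - \<alpha> * t - mR R * F t" for t
  have hder: "DERIV h x :> (Im (G (w x)) / Im (w x) - \<alpha> - mR R * (1 / (R + C * sqrt x)^2))"
    if x: "x > 0" for x
  proof -
    have yp: "Im (w x) > 0" using w_im x by simp
    have l: "DERIV (\<lambda>t. ln (Im (w t))) x :> Im (G (w x)) / Im (w x)"
      using DERIV_chain2[OF DERIV_ln_divide[OF yp] y_der[OF x]] by simp
    have f: "DERIV F x :> 1 / (R + C * sqrt x)^2"
      unfolding F_def using F_deriv[OF C R x] .
    show ?thesis unfolding h_def
      by (intro DERIV_diff l DERIV_cmult f) (auto intro!: derivative_eq_intros)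
  qed
  have hmono: "h t0 \<le> h t" if t: "t \<ge> t0" for t
  proof (rule DERIV_nonneg_imp_increasing_open[OF t])
    fix x assume x: "t0 < x" "x < t"
    hence xp: "x > 0" using t0 by simp
    have yp: "Im (w x) > 0" using w_im xp by simp
    have "cmod (w x) \<le> C * sqrt x" using t0(2) x by simp
    hence den: "(R + cmod (w x))^2 \<le> (R + C * sqrt x)^2"
      using R by (intro power_mono) auto
    have "w x \<noteq> 0" using yp by auto
    hence pos: "R + cmod (w x) > 0" using R by (simp add: add_nonneg_pos)
    have "Im (w x) * mR R / (R + C * sqrt x)^2 \<le> Im (w x) * mR R / (R + cmod (w x))^2"
    proof (rule divide_left_mono[OF den])
      show "0 \<le> Im (w x) * mR R" using yp mR_nonneg by simp
      have "0 < (R + cmod (w x))^2" using pos by simp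
      thus "0 < (R + C * sqrt x)^2 * (R + cmod (w x))^2" using den
        by (intro mult_pos_pos) linarith+
    qed
    also have "\<dots> \<le> Im (G (w x)) - \<alpha> * Im (w x)"
      using ImG_lower[OF yp R] by simp
    finally have "Im (w x) * (\<alpha> + mR R * (1 / (R + C * sqrt x)^2)) \<le> Im (G (w x))"
      by (simp add: algebra_simps)
    hence "\<alpha> + mR R * (1 / (R + C * sqrt x)^2) \<le> Im (G (w x)) / Im (w x)"
      using yp by (simp add: field_simps)
    thus "\<exists>y. DERIV h x :> y \<and> 0 \<le> y"
      using hder[OF xp] by (intro exI[of _ "Im (G (w x)) / Im (w x) - \<alpha> - mR R * (1 / (R + C * sqrt x)^2)"]) auto
  next
    show "continuous_on {t0..t} h"
    proof (intro continuous_at_imp_continuous_on ballI)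
      fix x assume "x \<in> {t0..t}"
      hence "x > 0" using t0 by auto
      thus "isCont h x" using hder by (intro DERIV_isCont) 
    qed
  qed
  define K where "K = ln C - h t0 - 2 * mR R / C^2 * ln C"
  have "eventually (\<lambda>t. \<alpha> * t + (mR R / C^2 - 1/2) * ln t \<le> K) at_top"
    unfolding eventually_at_top_linorder
  proof (intro exI allI impI)
    fix t assume t: "t \<ge> t0"
    hence tp: "t > 0" using t0 by simp
    have yp: "Im (w t) > 0" using w_im tp by simp
    have "Im (w t) \<le> cmod (w t)" using abs_Im_le_cmod[of "w t"] by linarith
    also have "\<dots> \<le> C * sqrt t" using t0(2) t by simp
    finally have "ln (Im (w t)) \<le> ln (C * sqrt t)" using yp by simp
    also have "ln (C * sqrt t) = ln C + 1/2 * ln t"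
      using C tp by (simp add: ln_mult ln_sqrt)
    finally have up: "ln (Im (w t)) \<le> ln C + 1/2 * ln t" .
    have "ln (C * sqrt t) \<le> ln (R + C * sqrt t)" using C tp R by (intro ln_mono) auto
    moreover have "R / (R + C * sqrt t) \<ge> 0" using C tp R by simp
    ultimately have "ln C + 1/2 * ln t \<le> ln (R + C * sqrt t) + R / (R + C * sqrt t)"
      using \<open>ln (C * sqrt t) = ln C + 1/2 * ln t\<close> by linarith
    hence "F t \<ge> 2 / C^2 * (ln C + 1/2 * ln t)"
      unfolding F_def by (rule mult_left_mono) simp
    hence "mR R * F t \<ge> mR R * (2 / C^2 * (ln C + 1/2 * ln t))"
      using mR_nonneg by (rule mult_left_mono)
    moreover have "h t0 \<le> h t" using hmono t by simp
    moreover have "mR R * (2 / C^2 * (ln C + 1/2 * ln t)) = mR R / C^2 * ln t + 2 * mR R / C^2 * ln C"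
      using C by (simp add: field_simps)
    moreover have "(mR R / C^2 - 1/2) * ln t = mR R / C^2 * ln t - 1/2 * ln t"
      by (simp add: algebra_simps)
    moreover have "h t = ln (Im (w t)) - \<alpha> * t - mR R * F t" by (simp add: h_def)
    ultimately show "\<alpha> * t + (mR R / C^2 - 1/2) * ln t \<le> K"
      using up unfolding K_def by linarith
  qed
  from growth_contra[OF this alpha] have "\<alpha> = 0" "mR R / C^2 \<le> 1/2" by auto
  thus ?thesis using C by (simp add: field_simps)
qed

end

lemma inv_to0:
  fixes w :: "real \<Rightarrow> complex"
  assumes "filterlim (\<lambda>t. cmod (w t)) at_top at_top"
  shows "((\<lambda>t. inverse (complex_of_real s - w t)) \<longlongrightarrow> 0) at_top"
proof -
  have "filterlim (\<lambda>t. (- \<bar>s\<bar>) + cmod (w t)) at_top at_top"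
    by (rule filterlim_tendsto_add_at_top[OF tendsto_const assms])
  hence "filterlim (\<lambda>t. cmod (complex_of_real s - w t)) at_top at_top"
  proof (rule filterlim_at_top_mono)
    show "\<forall>\<^sub>F t in at_top. (- \<bar>s\<bar>) + cmod (w t) \<le> cmod (complex_of_real s - w t)"
    proof (intro always_eventually allI)
      fix t
      have "\<bar>cmod (w t) - cmod (complex_of_real s)\<bar> \<le> cmod (w t - complex_of_real s)"
        by (rule norm_triangle_ineq3)
      thus "(- \<bar>s\<bar>) + cmod (w t) \<le> cmod (complex_of_real s - w t)"
        by (simp add: norm_minus_commute)
    qed
  qed
  hence "filterlim (\<lambda>t. complex_of_real s - w t) at_infinity at_top"
    by (rule filterlim_norm_at_top_imp_at_infinity)
  thus ?thesis by (rule filterlim_compose[OF tendsto_inverse_0])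
qed

locale herg2 = herg +
  assumes sq_int: "integrable \<mu> (\<lambda>s. s^2)"
begin

lemma int_w: "integrable \<mu> (\<lambda>s. 1 + s^2)"
  using sq_int by simp

lemma int_lin: "integrable \<mu> (\<lambda>s. s)"
proof (rule Bochner_Integration.integrable_bound[OF int_w])
  show "(\<lambda>s. s) \<in> borel_measurable \<mu>" by (rule meas) measurable
  show "AE x in \<mu>. norm x \<le> norm (1 + x^2)"
  proof (rule AE_I2)
    fix x :: real
    have "\<bar>x\<bar> \<le> 1 + x^2"
    proof (cases "\<bar>x\<bar> \<le> 1")
      case False
      hence "\<bar>x\<bar> * 1 \<le> \<bar>x\<bar> * \<bar>x\<bar>" by (intro mult_left_mono) auto
      thus ?thesis by (simp add: power2_eq_square)
    qed (simp add: add_increasing2)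
    thus "norm x \<le> norm (1 + x^2)" by simp
  qed
qed

definition N where "N = (\<integral>s. 1 + s^2 \<partial>\<mu>)"
definition c0 where "c0 = \<beta> - (\<integral>s. s \<partial>\<mu>)"

lemma N_nonneg: "N \<ge> 0"
  unfolding N_def by (rule integral_nonneg_AE) (auto intro!: AE_I2 add_nonneg_nonneg)

lemma cau_meas: "(\<lambda>s. complex_of_real (1 + s^2) / (complex_of_real s - z)) \<in> borel_measurable \<mu>"
  by (rule meas) measurable

lemma cau_bound:
  assumes "Im z > 0"
  shows "cmod (complex_of_real (1 + s^2) / (complex_of_real s - z)) \<le> (1 + s^2) / Im z"
proof -
  have "Im z \<le> cmod (complex_of_real s - z)"
    using abs_Im_le_cmod[of "complex_of_real s - z"] by simp
  moreover have "cmod (complex_of_real (1 + s^2)) = 1 + s^2"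
    by (simp only: norm_of_real) (simp add: add_nonneg_nonneg)
  ultimately show ?thesis using assms unfolding norm_divide
    by (metis divide_left_mono add_nonneg_nonneg zero_le_one zero_le_power2 mult_pos_pos order_less_le_trans)
qed

lemma cau_int:
  assumes "Im z > 0"
  shows "integrable \<mu> (\<lambda>s. complex_of_real (1 + s^2) / (complex_of_real s - z))"
proof (rule Bochner_Integration.integrable_bound)
  show "integrable \<mu> (\<lambda>s. (1 + s^2) / Im z)" using int_w by (rule integrable_divide)
  show "AE s in \<mu>. norm (complex_of_real (1 + s^2) / (complex_of_real s - z)) \<le> norm ((1 + s^2) / Im z)"
    using cau_bound[OF assms] assms by (intro AE_I2) (simp add: abs_of_nonneg add_nonneg_nonneg)
qed (rule cau_meas)

lemma G_eq2:
  assumes z: "Im z > 0"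
  shows "G z = complex_of_real \<alpha> * z + complex_of_real c0
              + (\<integral>s. complex_of_real (1 + s^2) / (complex_of_real s - z) \<partial>\<mu>)"
proof -
  have ne: "complex_of_real s - z \<noteq> 0" for s using z by (auto simp: complex_eq_iff)
  have eq: "(1 + complex_of_real s * z) / (complex_of_real s - z)
        = complex_of_real (1 + s^2) / (complex_of_real s - z) - complex_of_real s" for s
    using ne[of s] by (simp add: field_simps power2_eq_square)
  have il: "integrable \<mu> (\<lambda>s. complex_of_real s)" using int_lin by simp
  have "(\<integral>s. (1 + complex_of_real s * z) / (complex_of_real s - z) \<partial>\<mu>)
      = (\<integral>s. complex_of_real (1 + s^2) / (complex_of_real s - z) \<partial>\<mu>) - (\<integral>s. complex_of_real s \<partial>\<mu>)"
    unfolding eq by (rule Bochner_Integration.integral_diff[OF cau_int[OF z] il])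
  also have "(\<integral>s. complex_of_real s \<partial>\<mu>) = complex_of_real (\<integral>s. s \<partial>\<mu>)" by simp
  finally show ?thesis unfolding herg[OF z] c0_def by simp
qed

lemma cau_to0:
  fixes z :: "real \<Rightarrow> complex"
  assumes top: "filterlim (\<lambda>t. cmod (z t)) at_top at_top"
    and low: "eventually (\<lambda>t. Im (z t) \<ge> y0) at_top" and y0: "y0 > 0"
  shows "((\<lambda>t. \<integral>s. complex_of_real (1 + s^2) / (complex_of_real s - z t) \<partial>\<mu>) \<longlongrightarrow> 0) at_top"
proof -
  have "((\<lambda>t. \<integral>s. complex_of_real (1 + s^2) / (complex_of_real s - z t) \<partial>\<mu>) \<longlongrightarrow> (\<integral>s. 0 \<partial>\<mu>)) at_top"
  proof (rule integral_dominated_convergence_at_top[where w="\<lambda>s. (1 + s^2) / y0"])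
    show "(\<lambda>s. 0::complex) \<in> borel_measurable \<mu>" by simp
    show "(\<lambda>s. complex_of_real (1 + s^2) / (complex_of_real s - z t)) \<in> borel_measurable \<mu>" for t
      by (rule cau_meas)
    show "integrable \<mu> (\<lambda>s. (1 + s^2) / y0)" using int_w by (rule integrable_divide)
    show "AE s in \<mu>. ((\<lambda>t. complex_of_real (1 + s^2) / (complex_of_real s - z t)) \<longlongrightarrow> 0) at_top"
    proof (rule AE_I2)
      fix s :: real
      have "((\<lambda>t. complex_of_real (1 + s^2) * inverse (complex_of_real s - z t)) \<longlongrightarrow> complex_of_real (1 + s^2) * 0) at_top"
        by (intro tendsto_mult tendsto_const inv_to0[OF top])
      thus "((\<lambda>t. complex_of_real (1 + s^2) / (complex_of_real s - z t)) \<longlongrightarrow> 0) at_top"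
        by (simp add: divide_inverse)
    qed
    show "\<forall>\<^sub>F t in at_top. AE s in \<mu>. norm (complex_of_real (1 + s^2) / (complex_of_real s - z t)) \<le> (1 + s^2) / y0"
      using low
    proof eventually_elim
      case (elim t)
      hence zt: "Im (z t) > 0" using y0 by simp
      show ?case
      proof (rule AE_I2)
        fix s :: real
        have "(1 + s^2) / Im (z t) \<le> (1 + s^2) / y0"
          using elim y0 by (intro divide_left_mono) (auto simp: add_nonneg_nonneg)
        thus "norm (complex_of_real (1 + s^2) / (complex_of_real s - z t)) \<le> (1 + s^2) / y0"
          using cau_bound[OF zt, of s] by linarith
      qed
    qed
  qed
  thus ?thesis by simp
qed

end

locale orbit2 = orbit \<mu> \<alpha> \<beta> G w + herg2 \<mu> \<alpha> \<beta> G for \<mu> \<alpha> \<beta> G w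
begin

lemma y_low: "eventually (\<lambda>t. Im (w t) \<ge> Im (w 1)) at_top"
  unfolding eventually_at_top_linorder by (intro exI[of _ 1] allI impI y_mono) auto

lemma I_to0: "((\<lambda>t. \<integral>s. complex_of_real (1 + s^2) / (complex_of_real s - w t) \<partial>\<mu>) \<longlongrightarrow> 0) at_top"
  using norm_w_top y_low w_im[of 1] by (rule cau_to0) simp

lemma stepC:
  assumes a0: "\<alpha> = 0" and C: "C > 0" and bnd: "eventually (\<lambda>t. cmod (w t) \<le> C * sqrt t) at_top"
  shows "c0 = 0"
proof -
  let ?I = "\<lambda>t. \<integral>s. complex_of_real (1 + s^2) / (complex_of_real s - w t) \<partial>\<mu>"
  have ev: "eventually (\<lambda>t. Re (G (w t)) = c0 + Re (?I t)) at_top"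
    unfolding eventually_at_top_linorder
    by (intro exI[of _ 1] allI impI) (simp add: G_eq2[OF w_im] a0)
  have "((\<lambda>t. c0 + Re (?I t)) \<longlongrightarrow> c0 + Re 0) at_top"
    by (intro tendsto_add tendsto_const tendsto_Re I_to0)
  hence lim: "((\<lambda>t. c0 + Re (?I t)) \<longlongrightarrow> c0) at_top" by simp
  have ev': "eventually (\<lambda>t. c0 + Re (?I t) = Re (G (w t))) at_top"
    using ev by eventually_elim simp
  have "((\<lambda>t. Re (G (w t))) \<longlongrightarrow> c0) at_top"
    by (rule Lim_transform_eventually[OF lim ev'])
  hence l1: "((\<lambda>t. Re (w t) / t) \<longlongrightarrow> c0) at_top"
  proof (rule lhop_lin[rotated])
    show "\<forall>\<^sub>F t in at_top. ((\<lambda>t. Re (w t)) has_real_derivative Re (G (w t))) (at t)"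
      unfolding eventually_at_top_linorder by (intro exI[of _ 1] allI impI x_der) auto
  qed
  have "((\<lambda>t. Re (w t) / t) \<longlongrightarrow> 0) at_top"
  proof (rule Lim_null_comparison)
    show "((\<lambda>t. C / sqrt t) \<longlongrightarrow> 0) at_top" using C by real_asymp
    show "\<forall>\<^sub>F t in at_top. norm (Re (w t) / t) \<le> C / sqrt t"
      using bnd eventually_gt_at_top[of 0]
    proof eventually_elim
      case (elim t)
      have "\<bar>Re (w t)\<bar> \<le> C * sqrt t" using abs_Re_le_cmod[of "w t"] elim by linarith
      hence "\<bar>Re (w t)\<bar> / t \<le> C * sqrt t / t" using elim by (simp add: divide_right_mono)
      also have "C * sqrt t / t = C / sqrt t"
      proof -
        have q: "sqrt t > 0" "(sqrt t)^2 = t" using elim by auto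
        show ?thesis using q elim by (simp add: field_simps)
      qed
      finally show ?case using elim by simp
    qed
  qed
  from tendsto_unique[OF _ l1 this] show ?thesis by simp
qed

end

lemma (in herg) mR_mono: "R \<le> R' \<Longrightarrow> mR R \<le> mR R'"
  unfolding mR_def
  by (intro integral_mono int_ind) (auto simp: indicator_def add_nonneg_nonneg)

lemma (in herg2) mR_lim: "(mR \<longlongrightarrow> N) at_top"
proof -
  have "((\<lambda>R. \<integral>s. indicator {-R..R} s * (1 + s^2) \<partial>\<mu>) \<longlongrightarrow> (\<integral>s. 1 + s^2 \<partial>\<mu>)) at_top"
  proof (rule integral_dominated_convergence_at_top[where w="\<lambda>s. 1 + s^2"])
    show "(\<lambda>s. 1 + s^2) \<in> borel_measurable \<mu>" by (rule meas) measurable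
    show "(\<lambda>s. indicator {-R..R} s * (1 + s^2)) \<in> borel_measurable \<mu>" for R :: real
      by (rule meas) measurable
    show "integrable \<mu> (\<lambda>s. 1 + s^2)" by (rule int_w)
    show "AE s in \<mu>. ((\<lambda>R. indicator {-R..R} s * (1 + s^2)) \<longlongrightarrow> 1 + s^2) at_top"
    proof (rule AE_I2, rule tendsto_eventually)
      fix s :: real
      show "\<forall>\<^sub>F R in at_top. indicator {-R..R} s * (1 + s^2) = 1 + s^2"
        unfolding eventually_at_top_linorder
        by (intro exI[of _ "\<bar>s\<bar>"]) (auto simp: indicator_def abs_le_iff)
    qed
    show "\<forall>\<^sub>F R in at_top. AE s in \<mu>. norm (indicator {-R..R} s * (1 + s^2)) \<le> 1 + s^2"
      by (intro always_eventually allI AE_I2) (auto simp: indicator_def add_nonneg_nonneg)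
  qed
  thus ?thesis unfolding mR_def[abs_def] N_def .
qed

locale herg3 = herg2 +
  assumes a0: "\<alpha> = 0" and b0: "\<beta> = (\<integral>s. s \<partial>\<mu>)"
begin

lemma G3: "Im z > 0 \<Longrightarrow> G z = (\<integral>s. complex_of_real (1 + s^2) / (complex_of_real s - z) \<partial>\<mu>)"
  using G_eq2 unfolding c0_def by (simp add: a0 b0)

lemma Re_K: "Re (complex_of_real (1 + s^2) / (complex_of_real s - z))
     = (1 + s^2) * (s - Re z) / ((s - Re z)^2 + (Im z)^2)"
  by (simp add: Re_divide power2_eq_square)

lemma Im_K: "Im (complex_of_real (1 + s^2) / (complex_of_real s - z))
     = (1 + s^2) * Im z / ((s - Re z)^2 + (Im z)^2)"
  by (simp add: Im_divide power2_eq_square)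

lemma G_norm: assumes "Im z > 0" shows "cmod (G z) \<le> N / Im z"
proof -
  have "cmod (G z) \<le> (\<integral>s. cmod (complex_of_real (1 + s^2) / (complex_of_real s - z)) \<partial>\<mu>)"
    unfolding G3[OF assms] by (rule integral_norm_bound)
  also have "\<dots> \<le> (\<integral>s. (1 + s^2) / Im z \<partial>\<mu>)"
    using cau_int[OF assms] int_w cau_bound[OF assms]
    by (intro integral_mono) (auto intro: integrable_divide)
  also have "\<dots> = N / Im z" by (simp add: N_def)
  finally show ?thesis .
qed

lemma key_ineq:
  assumes z: "Im z > 0" and sec: "(Im z)^2 \<le> (cmod z)^2 / 4"
  shows "Re z * (Re z * Im (G z) - Im z * Re (G z))
         \<ge> Im z * (mR (cmod z / 2) / 16 - 2 * (N - mR (cmod z)))"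
proof -
  define x where "x = Re z"
  define y where "y = Im z"
  define K where "K s = complex_of_real (1 + s^2) / (complex_of_real s - z)" for s
  define c where "c = x^2 / (4 * (x^2 + y^2))"
  define g where "g s = indicator {-\<bar>x\<bar>..\<bar>x\<bar>} s * (1 + s^2) * c
        - 2 * ((1 + s^2) - indicator {-(2*\<bar>x\<bar>)..2*\<bar>x\<bar>} s * (1 + s^2))" for s
  have yp: "y > 0" using z by (simp add: y_def)
  have iK: "integrable \<mu> K" unfolding K_def using cau_int[OF z] .
  have iRe: "integrable \<mu> (\<lambda>s. Re (K s))" using iK by (rule integrable_Re)
  have iIm: "integrable \<mu> (\<lambda>s. Im (K s))" using iK by (rule integrable_Im)
  have ReG: "Re (G z) = (\<integral>s. Re (K s) \<partial>\<mu>)" unfolding G3[OF z] K_def using cau_int[OF z] by simp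
  have ImG: "Im (G z) = (\<integral>s. Im (K s) \<partial>\<mu>)" unfolding G3[OF z] K_def using cau_int[OF z] by simp
  have "Re z * (Re z * Im (G z) - Im z * Re (G z)) = (\<integral>s. x * (x * Im (K s) - y * Re (K s)) \<partial>\<mu>)"
    unfolding ReG ImG x_def y_def using iRe iIm by simp
  also have "\<dots> \<ge> (\<integral>s. y * g s \<partial>\<mu>)"
  proof (rule integral_mono)
    show "integrable \<mu> (\<lambda>s. x * (x * Im (K s) - y * Re (K s)))" using iRe iIm by simp
    show "integrable \<mu> (\<lambda>s. y * g s)" unfolding g_def
      by (intro integrable_mult_right Bochner_Integration.integrable_diff integrable_mult_left int_ind int_w)
    fix s
    have eq: "x * (x * Im (K s) - y * Re (K s)) = y * ((1 + s^2) * (x * (2*x - s)) / ((s - x)^2 + y^2))"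
    proof -
      have "(s - x)^2 + y^2 > 0" using yp by (simp add: add_nonneg_pos)
      hence Dne: "(s - x)^2 + y^2 \<noteq> 0" "y^2 + (s - x)^2 \<noteq> 0" by (auto simp: add.commute)
      have gen: "x * (x * (p * y / D) - y * (p * (s - x) / D)) = y * (p * (x * (2*x - s)) / D)" for p D :: real
        unfolding divide_inverse by algebra
      show ?thesis unfolding K_def Re_K Im_K x_def[symmetric] y_def[symmetric] by (rule gen)
    qed
    show "y * g s \<le> x * (x * Im (K s) - y * Re (K s))"
      unfolding eq g_def c_def using pw_ineq[OF yp, where s=s and x=x] yp by (intro mult_left_mono) auto
  qed
  also have "(\<integral>s. y * g s \<partial>\<mu>) = y * (c * mR \<bar>x\<bar> - 2 * (N - mR (2 * \<bar>x\<bar>)))"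
  proof -
    let ?A = "\<lambda>s. indicator {-\<bar>x\<bar>..\<bar>x\<bar>} s * (1 + s^2) * c"
    let ?B = "\<lambda>s. 2 * ((1 + s^2) - indicator {-(2*\<bar>x\<bar>)..2*\<bar>x\<bar>} s * (1 + (s::real)^2))"
    have iA: "integrable \<mu> ?A" by (intro integrable_mult_left int_ind)
    have iB': "integrable \<mu> (\<lambda>s. (1 + s^2) - indicator {-(2*\<bar>x\<bar>)..2*\<bar>x\<bar>} s * (1 + (s::real)^2))"
      by (intro Bochner_Integration.integrable_diff int_ind int_w)
    have iB: "integrable \<mu> ?B" using iB' by (rule integrable_mult_right)
    have "(\<integral>s. y * g s \<partial>\<mu>) = y * (\<integral>s. g s \<partial>\<mu>)" by (rule integral_mult_right_zero)
    also have "(\<integral>s. g s \<partial>\<mu>) = (\<integral>s. ?A s \<partial>\<mu>) - (\<integral>s. ?B s \<partial>\<mu>)"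
      unfolding g_def by (rule Bochner_Integration.integral_diff[OF iA iB])
    also have "(\<integral>s. ?A s \<partial>\<mu>) = mR \<bar>x\<bar> * c" unfolding mR_def by (rule integral_mult_left_zero)
    also have "(\<integral>s. ?B s \<partial>\<mu>) = 2 * (\<integral>s. (1 + s^2) - indicator {-(2*\<bar>x\<bar>)..2*\<bar>x\<bar>} s * (1 + (s::real)^2) \<partial>\<mu>)"
      by (rule integral_mult_right_zero)
    also have "(\<integral>s. (1 + s^2) - indicator {-(2*\<bar>x\<bar>)..2*\<bar>x\<bar>} s * (1 + (s::real)^2) \<partial>\<mu>) = N - mR (2 * \<bar>x\<bar>)"
      unfolding N_def mR_def by (rule Bochner_Integration.integral_diff[OF int_w int_ind])
    finally show ?thesis by (simp add: mult.commute)
  qed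
  finally have main: "Re z * (Re z * Im (G z) - Im z * Re (G z)) \<ge> y * (c * mR \<bar>x\<bar> - 2 * (N - mR (2 * \<bar>x\<bar>)))" .
  have W: "(cmod z)^2 = x^2 + y^2" by (simp add: cmod_power2 x_def y_def)
  have Wp: "x^2 + y^2 > 0" using yp by (simp add: add_nonneg_pos)
  have s2: "y^2 \<le> (x^2 + y^2) / 4" using sec W by (simp add: y_def)
  have "x^2 \<ge> 0" "y^2 \<ge> 0" by simp_all
  hence x2: "x^2 \<ge> (cmod z)^2 / 4" unfolding W using s2 unfolding add_divide_distrib by linarith
  hence "(cmod z / 2)^2 \<le> x^2" by (simp add: power_divide)
  hence ax: "cmod z / 2 \<le> \<bar>x\<bar>" by (simp add: abs_le_square_iff[symmetric])
  have c16: "c \<ge> 1/16"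
    unfolding c_def using x2 W Wp by (simp add: field_simps)
  have "mR (cmod z / 2) \<le> mR \<bar>x\<bar>" using ax by (rule mR_mono)
  hence "mR (cmod z / 2) / 16 \<le> c * mR \<bar>x\<bar>"
  proof -
    have "mR (cmod z / 2) / 16 \<le> (1/16) * mR \<bar>x\<bar>" using \<open>mR (cmod z / 2) \<le> mR \<bar>x\<bar>\<close> by simp
    also have "\<dots> \<le> c * mR \<bar>x\<bar>" using c16 mR_nonneg[of "\<bar>x\<bar>"] by (rule mult_right_mono)
    finally show ?thesis .
  qed
  moreover have "mR (cmod z) \<le> mR (2 * \<bar>x\<bar>)" using ax by (intro mR_mono) simp
  ultimately have "mR (cmod z / 2) / 16 - 2 * (N - mR (cmod z)) \<le> c * mR \<bar>x\<bar> - 2 * (N - mR (2 * \<bar>x\<bar>))"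
    by argo
  hence "y * (mR (cmod z / 2) / 16 - 2 * (N - mR (cmod z))) \<le> y * (c * mR \<bar>x\<bar> - 2 * (N - mR (2 * \<bar>x\<bar>)))"
    using yp by (intro mult_left_mono) auto
  thus ?thesis using main by (simp add: y_def)
qed

end

locale orbit3 = orbit2 \<mu> \<alpha> \<beta> G w + herg3 \<mu> \<alpha> \<beta> G for \<mu> \<alpha> \<beta> G w
begin

lemma N_pos: "N > 0"
proof (rule ccontr)
  assume "\<not> N > 0"
  hence N0: "N = 0" using N_nonneg by simp
  have G0: "G (w t) = 0" if tp: "t > 0" for t
  proof -
    have "cmod (G (w t)) \<le> N / Im (w t)" using G_norm[OF w_im[of t]] tp by simp
    thus ?thesis using N0 by simp
  qed
  have const: "w t = w 1" if t: "t \<ge> 1" for t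
  proof -
    have c: "continuous_on {1..t+1} w" by (rule w_cont) simp
    have cRe: "continuous_on {1..t+1} (\<lambda>t. Re (w t))" using c by (rule continuous_on_Re)
    have cIm: "continuous_on {1..t+1} (\<lambda>t. Im (w t))" using c by (rule continuous_on_Im)
    have lt: "(1::real) < t + 1" using t by simp
    have t2: "1 \<le> t" "t \<le> t + 1" using t by simp_all
    have "Re (w t) = Re (w 1)"
    proof (rule DERIV_isconst2[OF lt cRe _ t2])
      fix x :: real assume "1 < x" "x < t + 1"
      hence xp: "x > 0" by simp
      show "DERIV (\<lambda>t. Re (w t)) x :> 0" using x_der[OF xp] G0[OF xp] by simp
    qed
    moreover have "Im (w t) = Im (w 1)"
    proof (rule DERIV_isconst2[OF lt cIm _ t2])
      fix x :: real assume "1 < x" "x < t + 1"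
      hence xp: "x > 0" by simp
      show "DERIV (\<lambda>t. Im (w t)) x :> 0" using y_der[OF xp] G0[OF xp] by simp
    qed
    ultimately show ?thesis by (simp add: complex_eq_iff)
  qed
  have "eventually (\<lambda>t. cmod (w t) \<ge> cmod (w 1) + 1) at_top"
    using norm_w_top unfolding filterlim_at_top by blast
  moreover have "eventually (\<lambda>t. t \<ge> (1::real)) at_top" by (rule eventually_ge_at_top)
  ultimately have "eventually (\<lambda>t::real. False) at_top"
  proof eventually_elim
    case (elim t)
    thus False using const[of t] by simp
  qed
  thus False by simp
qed

lemma r_deriv:
  assumes t: "t > 0"
  shows "DERIV (\<lambda>t. (Im (w t))^2 / ((Re (w t))^2 + (Im (w t))^2)) t :>
     2 * Im (w t) * (Re (w t) * (Re (w t) * Im (G (w t)) - Im (w t) * Re (G (w t))))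
       / ((Re (w t))^2 + (Im (w t))^2)^2"
proof -
  define x where "x = Re (w t)"
  define y where "y = Im (w t)"
  define x' where "x' = Re (G (w t))"
  define y' where "y' = Im (G (w t))"
  have yp: "y > 0" using w_im t by (simp add: y_def)
  have Wp: "x^2 + y^2 \<noteq> 0" using W_ne[of t] t by (simp add: x_def y_def)
  have dx: "DERIV (\<lambda>t. Re (w t)) t :> x'" unfolding x'_def using x_der[OF t] .
  have dy: "DERIV (\<lambda>t. Im (w t)) t :> y'" unfolding y'_def using y_der[OF t] .
  have dy2: "DERIV (\<lambda>t. (Im (w t))^2) t :> 2 * y * y'"
    using DERIV_power[OF dy, of 2] by (simp add: y_def mult.commute mult.left_commute)
  have dx2: "DERIV (\<lambda>t. (Re (w t))^2) t :> 2 * x * x'"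
    using DERIV_power[OF dx, of 2] by (simp add: x_def mult.commute mult.left_commute)
  have dW: "DERIV (\<lambda>t. (Re (w t))^2 + (Im (w t))^2) t :> 2 * x * x' + 2 * y * y'"
    using DERIV_add[OF dx2 dy2] .
  have "DERIV (\<lambda>t. (Im (w t))^2 / ((Re (w t))^2 + (Im (w t))^2)) t :>
      ((2 * y * y') * (x^2 + y^2) - y^2 * (2 * x * x' + 2 * y * y')) / (x^2 + y^2)^2"
  proof -
    have "DERIV (\<lambda>t. (Im (w t))^2 / ((Re (w t))^2 + (Im (w t))^2)) t :>
      ((2 * y * y') * ((Re (w t))^2 + (Im (w t))^2) - (Im (w t))^2 * (2 * x * x' + 2 * y * y')) / (((Re (w t))^2 + (Im (w t))^2) * ((Re (w t))^2 + (Im (w t))^2))"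
      using DERIV_divide[OF dy2 dW] W_ne[of t] t by simp
    thus ?thesis unfolding x_def y_def power2_eq_square .
  qed
  moreover have "((2 * y * y') * (x^2 + y^2) - y^2 * (2 * x * x' + 2 * y * y'))
      = 2 * y * (x * (x * y' - y * x'))"
    by (simp add: power2_eq_square algebra_simps)
  ultimately show ?thesis by (simp add: x_def y_def x'_def y'_def)
qed

lemma sector: "\<exists>\<delta>>0. \<exists>t1\<ge>1. \<forall>t\<ge>t1. (Im (w t))^2 \<ge> \<delta> * (cmod (w t))^2"
proof -
  have "N - N / 64 < N" using N_pos by simp
  from order_tendstoD(1)[OF mR_lim this]
  obtain R0 where R0: "\<And>R. R \<ge> R0 \<Longrightarrow> mR R > N - N / 64"
    unfolding eventually_at_top_linorder by blast
  define M where "M = 2 * max R0 1"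
  obtain T where T: "\<And>t. t \<ge> T \<Longrightarrow> cmod (w t) \<ge> M"
    using norm_w_top unfolding filterlim_at_top eventually_at_top_linorder by blast
  define t1 where "t1 = max T 1"
  have t1: "t1 \<ge> 1" "\<And>t. t \<ge> t1 \<Longrightarrow> cmod (w t) \<ge> M" using T by (auto simp: t1_def)
  define r where "r t = (Im (w t))^2 / ((Re (w t))^2 + (Im (w t))^2)" for t
  have y1: "Im (w t1) > 0" using w_im t1 by simp
  define \<delta> where "\<delta> = min (r t1) (1/4)"
  have rpos: "r t1 > 0" unfolding r_def using y1 by (simp add: add_nonneg_pos)
  have dpos: "\<delta> > 0" using rpos by (simp add: \<delta>_def)
  have bar: "r t \<ge> \<delta>" if t: "t \<ge> t1" for t
    unfolding \<delta>_def
  proof (rule barrier[OF t])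
    show "continuous_on {t1..t} r"
    proof (intro continuous_at_imp_continuous_on ballI)
      fix x assume "x \<in> {t1..t}"
      hence "x > 0" using t1 by auto
      thus "isCont r x" unfolding r_def[abs_def] by (rule DERIV_isCont[OF r_deriv])
    qed
    fix x assume x: "t1 < x" "x < t"
    hence xp: "x > 0" using t1 by simp
    show "r differentiable (at x)" unfolding r_def using r_deriv[OF xp] real_differentiable_def by blast
    assume rx: "r x < 1/4"
    define z where "z = w x"
    have zi: "Im z > 0" using w_im xp by (simp add: z_def)
    have W: "(cmod z)^2 = (Re z)^2 + (Im z)^2" by (simp add: cmod_power2)
    have Wp: "(Re z)^2 + (Im z)^2 > 0" using zi by (simp add: add_nonneg_pos)
    have "(Im z)^2 < ((Re z)^2 + (Im z)^2) / 4" using rx Wp by (simp add: r_def z_def divide_simps)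
    hence sec: "(Im z)^2 \<le> (cmod z)^2 / 4" using W by simp
    have M: "cmod z \<ge> M" using t1(2)[of x] x by (simp add: z_def)
    have "mR (cmod z / 2) > N - N / 64" using M by (intro R0) (simp add: M_def)
    moreover have "mR (cmod z) > N - N / 64" using M by (intro R0) (simp add: M_def)
    ultimately have pos: "mR (cmod z / 2) / 16 - 2 * (N - mR (cmod z)) \<ge> 0"
      using N_pos by argo
    have "Im z * (mR (cmod z / 2) / 16 - 2 * (N - mR (cmod z))) \<ge> 0"
      using zi pos by simp
    hence "Re z * (Re z * Im (G z) - Im z * Re (G z)) \<ge> 0"
      using key_ineq[OF zi sec] by linarith
    hence "2 * Im z * (Re z * (Re z * Im (G z) - Im z * Re (G z))) / ((Re z)^2 + (Im z)^2)^2 \<ge> 0"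
      using zi by simp
    thus "\<exists>y. DERIV r x :> y \<and> y \<ge> 0"
      using r_deriv[OF xp] unfolding r_def[abs_def] z_def by blast
  qed
  show ?thesis
  proof (intro exI conjI allI impI)
    show "\<delta> > 0" by (rule dpos)
    show "t1 \<ge> 1" by (rule t1)
    fix t assume t: "t \<ge> t1"
    have Wp: "(Re (w t))^2 + (Im (w t))^2 > 0" using w_im[of t] t t1 by (simp add: add_nonneg_pos)
    have "\<delta> \<le> (Im (w t))^2 / ((Re (w t))^2 + (Im (w t))^2)" using bar[OF t] by (simp add: r_def)
    hence "\<delta> * ((Re (w t))^2 + (Im (w t))^2) \<le> (Im (w t))^2" using Wp by (simp add: field_simps)
    thus "(Im (w t))^2 \<ge> \<delta> * (cmod (w t))^2" by (simp add: cmod_power2)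
  qed
qed

lemma E_id:
  assumes z: "Im z > 0"
  shows "complex_of_real ((1 + s^2) * s) / (complex_of_real s - z)
       = complex_of_real (1 + s^2) + z * (complex_of_real (1 + s^2) / (complex_of_real s - z))"
proof -
  have ne: "complex_of_real s - z \<noteq> 0" using z by (auto simp: complex_eq_iff)
  show ?thesis using ne by (simp add: field_simps)
qed

lemma E_int:
  assumes z: "Im z > 0"
  shows "integrable \<mu> (\<lambda>s. complex_of_real ((1 + s^2) * s) / (complex_of_real s - z))"
proof -
  have i1: "integrable \<mu> (\<lambda>s. complex_of_real (1 + s^2))" using int_w by (rule integrable_of_real)
  have i2: "integrable \<mu> (\<lambda>s. z * (complex_of_real (1 + s^2) / (complex_of_real s - z)))"
    using cau_int[OF z] by (rule integrable_mult_right)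
  show ?thesis unfolding E_id[OF z] using i1 i2 by (rule Bochner_Integration.integrable_add)
qed

lemma E_eq:
  assumes z: "Im z > 0"
  shows "(\<integral>s. complex_of_real ((1 + s^2) * s) / (complex_of_real s - z) \<partial>\<mu>)
       = complex_of_real N + z * G z"
proof -
  have i1: "integrable \<mu> (\<lambda>s. complex_of_real (1 + s^2))" using int_w by (rule integrable_of_real)
  have i2: "integrable \<mu> (\<lambda>s. z * (complex_of_real (1 + s^2) / (complex_of_real s - z)))"
    using cau_int[OF z] by (rule integrable_mult_right)
  have "(\<integral>s. complex_of_real ((1 + s^2) * s) / (complex_of_real s - z) \<partial>\<mu>)
      = (\<integral>s. complex_of_real (1 + s^2) \<partial>\<mu>) + (\<integral>s. z * (complex_of_real (1 + s^2) / (complex_of_real s - z)) \<partial>\<mu>)"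
    unfolding E_id[OF z] by (rule Bochner_Integration.integral_add[OF i1 i2])
  also have "(\<integral>s. complex_of_real (1 + s^2) \<partial>\<mu>) = complex_of_real N"
    unfolding N_def by (rule integral_complex_of_real)
  also have "(\<integral>s. z * (complex_of_real (1 + s^2) / (complex_of_real s - z)) \<partial>\<mu>) = z * G z"
    unfolding G3[OF z] by (rule integral_mult_right_zero)
  finally show ?thesis .
qed

lemma E_to0: "((\<lambda>t. \<integral>s. complex_of_real ((1 + s^2) * s) / (complex_of_real s - w t) \<partial>\<mu>) \<longlongrightarrow> 0) at_top"
proof -
  obtain \<delta> t1 where dp: "\<delta> > 0" and t1: "t1 \<ge> 1" and sec: "\<And>t. t \<ge> t1 \<Longrightarrow> (Im (w t))^2 \<ge> \<delta> * (cmod (w t))^2"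
    using sector by blast
  define K where "K = 2 + 2 / sqrt \<delta>"
  have Kp: "K \<ge> 0" using dp by (simp add: K_def)
  have bnd: "\<bar>s\<bar> \<le> K * cmod (complex_of_real s - w t)" if t: "t \<ge> t1" for s t
  proof -
    define d where "d = cmod (complex_of_real s - w t)"
    define W where "W = cmod (w t)"
    have yp: "Im (w t) > 0" using w_im t t1 by simp
    have d1: "\<bar>s\<bar> - W \<le> d"
    proof -
      have "cmod (complex_of_real s) \<le> cmod (complex_of_real s - w t) + cmod (w t)"
        using norm_triangle_ineq[of "complex_of_real s - w t" "w t"] by simp
      thus ?thesis by (simp add: d_def W_def)
    qed
    have d2: "Im (w t) \<le> d"
      using abs_Im_le_cmod[of "complex_of_real s - w t"] by (simp add: d_def)
    have "sqrt (\<delta> * W^2) \<le> sqrt ((Im (w t))^2)" using sec[OF t] unfolding W_def by (rule real_sqrt_le_mono)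
    moreover have "sqrt ((Im (w t))^2) = Im (w t)" using yp by simp
    moreover have "sqrt (\<delta> * W^2) = sqrt \<delta> * W" by (simp add: real_sqrt_mult W_def)
    ultimately have "sqrt \<delta> * W \<le> Im (w t)" by simp
    hence d3: "sqrt \<delta> * W \<le> d" using d2 by linarith
    have sd: "sqrt \<delta> > 0" using dp by simp
    have dn: "d \<ge> 0" by (simp add: d_def)
    show ?thesis
    proof (cases "\<bar>s\<bar> \<ge> 2 * W")
      case True
      hence "\<bar>s\<bar> \<le> 2 * d" using d1 by linarith
      also have "2 * d \<le> K * d" using dn dp by (intro mult_right_mono) (auto simp: K_def)
      finally show ?thesis by (simp add: d_def)
    next
      case False
      hence "\<bar>s\<bar> \<le> 2 * W" by simp
      also have "2 * W \<le> 2 / sqrt \<delta> * d" using d3 sd by (simp add: field_simps)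
      also have "2 / sqrt \<delta> * d \<le> K * d" using dn by (intro mult_right_mono) (auto simp: K_def)
      finally show ?thesis by (simp add: d_def)
    qed
  qed
  have "((\<lambda>t. \<integral>s. complex_of_real ((1 + s^2) * s) / (complex_of_real s - w t) \<partial>\<mu>) \<longlongrightarrow> (\<integral>s. 0 \<partial>\<mu>)) at_top"
  proof (rule integral_dominated_convergence_at_top[where w="\<lambda>s. (1 + s^2) * K"])
    show "(\<lambda>s. 0::complex) \<in> borel_measurable \<mu>" by simp
    show "(\<lambda>s. complex_of_real ((1 + s^2) * s) / (complex_of_real s - w t)) \<in> borel_measurable \<mu>" for t
      by (rule meas) measurable
    show "integrable \<mu> (\<lambda>s. (1 + s^2) * K)" using int_w by (rule integrable_mult_left)
    show "AE s in \<mu>. ((\<lambda>t. complex_of_real ((1 + s^2) * s) / (complex_of_real s - w t)) \<longlongrightarrow> 0) at_top"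
    proof (rule AE_I2)
      fix s :: real
      have "((\<lambda>t. complex_of_real ((1 + s^2) * s) * inverse (complex_of_real s - w t)) \<longlongrightarrow> complex_of_real ((1 + s^2) * s) * 0) at_top"
        by (intro tendsto_mult tendsto_const inv_to0[OF norm_w_top])
      thus "((\<lambda>t. complex_of_real ((1 + s^2) * s) / (complex_of_real s - w t)) \<longlongrightarrow> 0) at_top"
        by (simp add: divide_inverse)
    qed
    show "\<forall>\<^sub>F t in at_top. AE s in \<mu>. norm (complex_of_real ((1 + s^2) * s) / (complex_of_real s - w t)) \<le> (1 + s^2) * K"
      unfolding eventually_at_top_linorder
    proof (intro exI[of _ t1] allI impI AE_I2)
      fix t s assume t: "t \<ge> t1"
      have dp': "cmod (complex_of_real s - w t) > 0"
        using w_im[of t] t t1 by (auto simp: complex_eq_iff)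
      have p: "1 + s^2 \<ge> 0" by (simp add: add_nonneg_nonneg)
      have "norm (complex_of_real ((1 + s^2) * s) / (complex_of_real s - w t))
          = (1 + s^2) * (\<bar>s\<bar> / cmod (complex_of_real s - w t))"
        unfolding norm_divide norm_of_real using p by (simp add: abs_mult)
      also have "\<dots> \<le> (1 + s^2) * K"
        using bnd[OF t, of s] dp' p by (intro mult_left_mono) (auto simp: divide_simps mult.commute)
      finally show "norm (complex_of_real ((1 + s^2) * s) / (complex_of_real s - w t)) \<le> (1 + s^2) * K" .
    qed
  qed
  thus ?thesis by simp
qed

lemma wG_lim: "((\<lambda>t. 2 * w t * G (w t)) \<longlongrightarrow> - 2 * complex_of_real N) at_top"
proof -
  let ?E = "\<lambda>t. \<integral>s. complex_of_real ((1 + s^2) * s) / (complex_of_real s - w t) \<partial>\<mu>"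
  have "((\<lambda>t. 2 * (?E t - complex_of_real N)) \<longlongrightarrow> 2 * (0 - complex_of_real N)) at_top"
    by (intro tendsto_mult tendsto_diff tendsto_const E_to0)
  moreover have "eventually (\<lambda>t. 2 * (?E t - complex_of_real N) = 2 * w t * G (w t)) at_top"
    using eventually_ge_at_top[of 0]
  proof eventually_elim
    case (elim t)
    have e: "?E t = complex_of_real N + w t * G (w t)" using E_eq[OF w_im[OF elim]] .
    show ?case unfolding e by (simp add: algebra_simps)
  qed
  ultimately show ?thesis by (simp add: Lim_transform_eventually)
qed

lemma sq_lim: "((\<lambda>t. (w t)^2 / complex_of_real t) \<longlongrightarrow> - 2 * complex_of_real N) at_top"
proof -
  have re: "((\<lambda>t. ((Re (w t))^2 - (Im (w t))^2) / t) \<longlongrightarrow> - 2 * N) at_top"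
  proof (rule lhop_lin)
    show "\<forall>\<^sub>F t in at_top. ((\<lambda>t. (Re (w t))^2 - (Im (w t))^2) has_real_derivative Re (2 * w t * G (w t))) (at t)"
      using eventually_gt_at_top[of 0]
    proof eventually_elim
      case (elim t)
      have "((\<lambda>t. (Re (w t))^2 - (Im (w t))^2) has_real_derivative
          2 * (Re (G (w t)) * Re (w t)) - 2 * (Im (G (w t)) * Im (w t))) (at t)"
        using w_der[OF elim] by (intro derivative_eq_intros x_der[OF elim] y_der[OF elim]) auto
      thus ?case by (simp add: algebra_simps)
    qed
    show "((\<lambda>t. Re (2 * w t * G (w t))) \<longlongrightarrow> - 2 * N) at_top"
      using tendsto_Re[OF wG_lim] by simp
  qed
  have im: "((\<lambda>t. (2 * Re (w t) * Im (w t)) / t) \<longlongrightarrow> 0) at_top"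
  proof (rule lhop_lin)
    show "\<forall>\<^sub>F t in at_top. ((\<lambda>t. 2 * Re (w t) * Im (w t)) has_real_derivative Im (2 * w t * G (w t))) (at t)"
      using eventually_gt_at_top[of 0]
    proof eventually_elim
      case (elim t)
      have "((\<lambda>t. 2 * Re (w t) * Im (w t)) has_real_derivative
          2 * Re (G (w t)) * Im (w t) + 2 * Re (w t) * Im (G (w t))) (at t)"
        using w_der[OF elim] by (intro derivative_eq_intros x_der[OF elim] y_der[OF elim]) auto
      thus ?case by (simp add: algebra_simps)
    qed
    show "((\<lambda>t. Im (2 * w t * G (w t))) \<longlongrightarrow> 0) at_top"
      using tendsto_Im[OF wG_lim] by simp
  qed
  show ?thesis unfolding tendsto_complex_iff
    using re im by (simp add: Re_divide_of_real Im_divide_of_real Re_power2 Im_power2)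
qed

lemma final_lim: "((\<lambda>t. w t / complex_of_real (sqrt t)) \<longlongrightarrow> \<i> * complex_of_real (sqrt (2 * N))) at_top"
proof -
  define a where "a = sqrt (2 * N)"
  have ap: "a > 0" using N_pos by (simp add: a_def)
  have a2: "complex_of_real a ^ 2 = 2 * complex_of_real N"
    using N_pos by (simp add: a_def flip: of_real_power)
  have g: "((\<lambda>t. cmod ((w t)^2 / complex_of_real t - (- 2 * complex_of_real N)) / a) \<longlongrightarrow> 0 / a) at_top"
    by (intro tendsto_divide tendsto_const tendsto_norm_zero LIM_zero sq_lim) (use ap in simp)
  have "((\<lambda>t. w t / complex_of_real (sqrt t) - \<i> * complex_of_real a) \<longlongrightarrow> 0) at_top"
  proof (rule Lim_null_comparison)
    show "((\<lambda>t. cmod ((w t)^2 / complex_of_real t - (- 2 * complex_of_real N)) / a) \<longlongrightarrow> 0) at_top"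
      using g by simp
    show "\<forall>\<^sub>F t in at_top. norm (w t / complex_of_real (sqrt t) - \<i> * complex_of_real a)
        \<le> cmod ((w t)^2 / complex_of_real t - (- 2 * complex_of_real N)) / a"
      using eventually_gt_at_top[of 0]
    proof eventually_elim
      case (elim t)
      define v where "v = w t / complex_of_real (sqrt t)"
      have st: "sqrt t > 0" using elim by simp
      have imv: "Im v > 0" using w_im[of t] elim st by (simp add: v_def Im_divide_of_real)
      have v2: "v^2 = (w t)^2 / complex_of_real t"
        using elim by (simp add: v_def power_divide flip: of_real_power)
      have fac: "v^2 + complex_of_real a ^ 2 = (v - \<i> * complex_of_real a) * (v + \<i> * complex_of_real a)"
        by (simp add: power2_eq_square algebra_simps)
      have "a \<le> Im (v + \<i> * complex_of_real a)" using imv by simp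
      also have "\<dots> \<le> cmod (v + \<i> * complex_of_real a)" using abs_Im_le_cmod by (rule order_trans[OF abs_ge_self])
      finally have lo: "a \<le> cmod (v + \<i> * complex_of_real a)" .
      have "cmod (v - \<i> * complex_of_real a) * a \<le> cmod (v - \<i> * complex_of_real a) * cmod (v + \<i> * complex_of_real a)"
        using lo by (intro mult_left_mono) auto
      also have "\<dots> = cmod (v^2 + complex_of_real a ^ 2)" unfolding fac norm_mult ..
      also have "v^2 + complex_of_real a ^ 2 = (w t)^2 / complex_of_real t - (- 2 * complex_of_real N)"
        unfolding v2 a2 by simp
      finally have "cmod (v - \<i> * complex_of_real a) * a \<le> cmod ((w t)^2 / complex_of_real t - (- 2 * complex_of_real N))" .
      thus ?case using ap by (simp add: v_def field_simps)
    qed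
  qed
  hence "((\<lambda>t. w t / complex_of_real (sqrt t)) \<longlongrightarrow> \<i> * complex_of_real a) at_top"
    by (rule LIM_zero_cancel)
  thus ?thesis by (simp add: a_def)
qed

lemma final_norm: "((\<lambda>t. cmod (w t) / sqrt t) \<longlongrightarrow> sqrt (2 * N)) at_top"
proof -
  have "((\<lambda>t. cmod (w t / complex_of_real (sqrt t))) \<longlongrightarrow> cmod (\<i> * complex_of_real (sqrt (2 * N)))) at_top"
    by (intro tendsto_norm final_lim)
  moreover have "cmod (\<i> * complex_of_real (sqrt (2 * N))) = sqrt (2 * N)"
    using N_pos by (simp add: norm_mult)
  moreover have "eventually (\<lambda>t. cmod (w t / complex_of_real (sqrt t)) = cmod (w t) / sqrt t) at_top"
    using eventually_gt_at_top[of 0] by eventually_elim (simp add: norm_divide)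
  ultimately show ?thesis by (simp add: Lim_transform_eventually)
qed

end


lemma herg_inst:
  assumes "finite_measure \<mu>" "sets \<mu> = sets borel" "\<alpha> \<ge> 0"
    "\<forall>z\<in>UHP. G z = complex_of_real \<alpha> * z + complex_of_real \<beta>
                     + (\<integral>s. (1 + complex_of_real s * z) / (complex_of_real s - z) \<partial>\<mu>)"
  shows "herg \<mu> \<alpha> \<beta> G"
  using assms by (intro herg.intro herg_axioms.intro) (auto simp: UHP_def)

lemma orbit_inst:
  assumes H: "herg \<mu> \<alpha> \<beta> G" and sg: "semigroup_H \<phi>" and dw: "DW_infinity \<phi>"
    and gen: "infinitesimal_generator \<phi> G" and z: "z \<in> UHP"
  shows "orbit \<mu> \<alpha> \<beta> G (\<lambda>t. \<phi> t z)"
proof (intro orbit.intro[OF H] orbit_axioms.intro)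
  fix t :: real assume t: "t \<ge> 0"
  have "\<phi> t ` UHP \<subseteq> UHP" using sg t unfolding semigroup_H_def by blast
  thus "Im (\<phi> t z) > 0" using z by (auto simp: UHP_def)
  show "((\<lambda>t. \<phi> t z) has_vector_derivative G (\<phi> t z)) (at t within {0..})"
    using gen z t unfolding infinitesimal_generator_def by blast
next
  show "filterlim (\<lambda>t. \<phi> t z) at_infinity at_top" using dw z unfolding DW_infinity_def by blast
qed

lemma limsup_bound:
  assumes "Limsup at_top (\<lambda>t. ereal (cmod (w t) / sqrt t)) < \<infinity>"
  shows "\<exists>C>0. eventually (\<lambda>t. cmod (w t) \<le> C * sqrt t) at_top"
proof -
  obtain n :: nat where n: "Limsup at_top (\<lambda>t. ereal (cmod (w t) / sqrt t)) < ereal (real n)"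
    using assms less_PInf_Ex_of_nat by auto
  have "eventually (\<lambda>t. ereal (cmod (w t) / sqrt t) < ereal (real n)) at_top"
    using Limsup_lessD[OF n] .
  hence "eventually (\<lambda>t. cmod (w t) \<le> (real n + 1) * sqrt t) at_top"
    using eventually_gt_at_top[of 0]
  proof eventually_elim
    case (elim t)
    hence "cmod (w t) / sqrt t < real n" by simp
    hence "cmod (w t) < real n * sqrt t" using elim by (simp add: divide_less_eq)
    moreover have "real n * sqrt t \<le> (real n + 1) * sqrt t" using elim by (intro mult_right_mono) auto
    ultimately show ?case by simp
  qed
  thus ?thesis by (intro exI[of _ "real n + 1"]) auto
qed

theorem theorem4p5:
  fixes \<phi> :: "real \<Rightarrow> complex \<Rightarrow> complex"
    and G :: "complex \<Rightarrow> complex"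
    and \<alpha> \<beta> :: real
    and \<mu> :: "real measure"
  assumes sg: "semigroup_H \<phi>"
    and ne: "non_elliptic \<phi>"
    and dw: "DW_infinity \<phi>"
    and par: "parabolic_semigroup \<phi>"
    and zhs: "zero_hyperbolic_step \<phi>"
    and gen: "infinitesimal_generator \<phi> G"
    and alpha: "\<alpha> \<ge> 0"
    and mu_borel: "sets \<mu> = sets borel"
    and mu_fin: "finite_measure \<mu>"
    and herglotz: "\<forall>z\<in>UHP. G z = complex_of_real \<alpha> * z + complex_of_real \<beta>
                     + (\<integral>s. (1 + complex_of_real s * z) / (complex_of_real s - z) \<partial>\<mu>)"
  shows "(extremal_rate \<phi> \<longleftrightarrow>
            (\<exists>z\<in>UHP. Limsup at_top (\<lambda>t. ereal (cmod (\<phi> t z) / sqrt t)) < \<infinity>))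
       \<and> (extremal_rate \<phi> \<longleftrightarrow>
            (\<forall>z\<in>UHP. Limsup at_top (\<lambda>t. ereal (cmod (\<phi> t z) / sqrt t)) < \<infinity>))
       \<and> (extremal_rate \<phi> \<longleftrightarrow>
            (\<alpha> = 0 \<and> (\<integral>\<^sup>+ s. ennreal (s\<^sup>2) \<partial>\<mu>) < \<infinity> \<and> \<beta> = (\<integral>s. s \<partial>\<mu>)))
       \<and> (extremal_rate \<phi> \<longrightarrow>
            (\<forall>z\<in>UHP. ((\<lambda>t. \<phi> t z / complex_of_real (sqrt t)) \<longlongrightarrow>
                 \<i> * complex_of_real (sqrt (2 * (\<integral>s. 1 + s\<^sup>2 \<partial>\<mu>)))) at_top))"
proof -
  have H: "herg \<mu> \<alpha> \<beta> G" using mu_fin mu_borel alpha herglotz by (rule herg_inst)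
  interpret H: herg \<mu> \<alpha> \<beta> G by (rule H)
  have iU: "\<i> \<in> UHP" by (simp add: UHP_def)
  define B where "B z \<longleftrightarrow> Limsup at_top (\<lambda>t. ereal (cmod (\<phi> t z) / sqrt t)) < \<infinity>" for z
  define cond where "cond \<longleftrightarrow> \<alpha> = 0 \<and> (\<integral>\<^sup>+ s. ennreal (s\<^sup>2) \<partial>\<mu>) < \<infinity> \<and> \<beta> = (\<integral>s. s \<partial>\<mu>)"
  define Nn where "Nn = (\<integral>s. 1 + s\<^sup>2 \<partial>\<mu>)"
  have s1: "\<forall>z\<in>UHP. B z" if ext: "extremal_rate \<phi>"
  proof
    fix z assume z: "z \<in> UHP"
    obtain L where L: "L > 0" "\<forall>z\<in>UHP. ((\<lambda>t. cmod (\<phi> t z) / sqrt t) \<longlongrightarrow> L) at_top"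
      using ext unfolding extremal_rate_def by blast
    have "((\<lambda>t. ereal (cmod (\<phi> t z) / sqrt t)) \<longlongrightarrow> ereal L) at_top"
      using L(2) z by (intro tendsto_ereal) blast
    hence "Limsup at_top (\<lambda>t. ereal (cmod (\<phi> t z) / sqrt t)) = ereal L"
      by (intro lim_imp_Limsup) simp_all
    thus "B z" unfolding B_def by simp
  qed
  have s2: "cond" if ex: "\<exists>z\<in>UHP. B z"
  proof -
    obtain z where z: "z \<in> UHP" "B z" using ex by blast
    have Orb: "orbit \<mu> \<alpha> \<beta> G (\<lambda>t. \<phi> t z)" by (rule orbit_inst[OF H sg dw gen z(1)])
    interpret O: orbit \<mu> \<alpha> \<beta> G "\<lambda>t. \<phi> t z" by (rule Orb)
    obtain C where C: "C > 0" "eventually (\<lambda>t. cmod (\<phi> t z) \<le> C * sqrt t) at_top"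
      using limsup_bound[of "\<lambda>t. \<phi> t z"] z(2) unfolding B_def by blast
    have a0: "\<alpha> = 0" using O.growth[OF C, of 0] by simp
    have "\<And>R. R \<ge> 0 \<Longrightarrow> H.mR R \<le> C^2 / 2" using O.growth[OF C] by blast
    hence fin: "(\<integral>\<^sup>+ s. ennreal (s\<^sup>2) \<partial>\<mu>) < \<infinity>" by (rule H.second_moment)
    have sq: "integrable \<mu> (\<lambda>s. s^2)" using fin by (rule H.int_sq)
    have H2: "herg2 \<mu> \<alpha> \<beta> G" by (intro herg2.intro H herg2_axioms.intro sq)
    interpret O2: orbit2 \<mu> \<alpha> \<beta> G "\<lambda>t. \<phi> t z" by (rule orbit2.intro[OF Orb H2])
    have "O2.c0 = 0" using O2.stepC[OF a0 C] .
    thus ?thesis unfolding cond_def O2.c0_def using a0 fin by simp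
  qed
  have s3: "((\<lambda>t. \<phi> t z / complex_of_real (sqrt t)) \<longlongrightarrow> \<i> * complex_of_real (sqrt (2 * Nn))) at_top
          \<and> ((\<lambda>t. cmod (\<phi> t z) / sqrt t) \<longlongrightarrow> sqrt (2 * Nn)) at_top \<and> Nn > 0"
    if c: cond and z: "z \<in> UHP" for z
  proof -
    have Orb: "orbit \<mu> \<alpha> \<beta> G (\<lambda>t. \<phi> t z)" by (rule orbit_inst[OF H sg dw gen z])
    interpret O: orbit \<mu> \<alpha> \<beta> G "\<lambda>t. \<phi> t z" by (rule Orb)
    have sq: "integrable \<mu> (\<lambda>s. s^2)" using c unfolding cond_def by (intro H.int_sq) simp
    have H2: "herg2 \<mu> \<alpha> \<beta> G" by (intro herg2.intro H herg2_axioms.intro sq)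
    have H3: "herg3 \<mu> \<alpha> \<beta> G" by (intro herg3.intro H2 herg3_axioms.intro) (use c in \<open>simp_all add: cond_def\<close>)
    have O2: "orbit2 \<mu> \<alpha> \<beta> G (\<lambda>t. \<phi> t z)" by (rule orbit2.intro[OF Orb H2])
    interpret O3: orbit3 \<mu> \<alpha> \<beta> G "\<lambda>t. \<phi> t z" by (intro orbit3.intro O2 H3)
    show ?thesis using O3.final_lim O3.final_norm O3.N_pos unfolding O3.N_def Nn_def by simp
  qed
  have s4: "extremal_rate \<phi>" if c: cond
    unfolding extremal_rate_def
  proof (intro exI[of _ "sqrt (2 * Nn)"] conjI ballI)
    show "sqrt (2 * Nn) > 0" using s3[OF c iU] by simp
    fix z assume "z \<in> UHP"
    thus "((\<lambda>t. cmod (\<phi> t z) / sqrt t) \<longlongrightarrow> sqrt (2 * Nn)) at_top" using s3[OF c] by blast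
  qed
  have e1: "extremal_rate \<phi> \<longleftrightarrow> (\<exists>z\<in>UHP. B z)" using s1 s2 s4 iU by blast
  have e2: "extremal_rate \<phi> \<longleftrightarrow> (\<forall>z\<in>UHP. B z)" using s1 s2 s4 iU by blast
  have e3: "extremal_rate \<phi> \<longleftrightarrow> cond" using s1 s2 s4 iU by blast
  have e4: "extremal_rate \<phi> \<longrightarrow> (\<forall>z\<in>UHP. ((\<lambda>t. \<phi> t z / complex_of_real (sqrt t)) \<longlongrightarrow>
                 \<i> * complex_of_real (sqrt (2 * Nn))) at_top)"
    using e3 s3 by blast
  show ?thesis using e1 e2 e3 e4 unfolding B_def cond_def Nn_def by blast
qed

end
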